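(* Let $V$ be a finite set and $d:V\times V\to\mathbb{R}_{\ge0}$ a semi-metric (symmetric, $d(i,i)=0$). Let $s\ge1$ be such that $d(i,j)\le s\,(d(i,k)+d(k,j))$ for all $i,j,k\in V$. Let $\pi:V\to\mathbb{R}_+$ with $\pi(V)=1$ and suppose $\sum_{i,j\in V}\pi(i)\pi(j)d(i,j)=2$. Let $L\subseteq V$ be nonempty with $\mathrm{diam}(L)=\max_{i,j\in L}d(i,j)$. Then $$\sum_{i\notin L}\pi(i)\,d(i,L)\ge\frac{1}{s^2}-\frac12\,\mathrm{diam}(L).$$
   Context: $d(i,L)=\min_{j\in L}d(i,j)$; $\pi(A)=\sum_{i\in A}\pi(i)$. *)

theory Defs
  imports Complex_Main
begin

definition dist_set :: "('a \<Rightarrow> 'a \<Rightarrow> real) \<Rightarrow> 'a \<Rightarrow> 'a set \<Rightarrow> real" where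
  "dist_set d i L = Min ((\<lambda>j. d i j) ` L)"

definition diam_set :: "('a \<Rightarrow> 'a \<Rightarrow> real) \<Rightarrow> 'a set \<Rightarrow> real" where
  "diam_set d L = Max ((\<lambda>(i,j). d i j) ` (L \<times> L))"

end

theory Submission
  imports Defs
begin

theorem mainTheorem10:
  fixes V :: "'a set" and d :: "'a \<Rightarrow> 'a \<Rightarrow> real" and \<pi> :: "'a \<Rightarrow> real"
    and s :: real and L :: "'a set"
  assumes finV: "finite V"
    and nonneg: "\<forall>i\<in>V. \<forall>j\<in>V. d i j \<ge> 0"
    and sym: "\<forall>i\<in>V. \<forall>j\<in>V. d i j = d j i"
    and refl: "\<forall>i\<in>V. d i i = 0"
    and s_ge: "s \<ge> 1"
    and relaxed_tri: "\<forall>i\<in>V. \<forall>j\<in>V. \<forall>k\<in>V. d i j \<le> s * (d i k + d k j)"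
    and pi_pos: "\<forall>i\<in>V. \<pi> i > 0"
    and pi_sum: "(\<Sum>i\<in>V. \<pi> i) = 1"
    and avg: "(\<Sum>i\<in>V. \<Sum>j\<in>V. \<pi> i * \<pi> j * d i j) = 2"
    and L_sub: "L \<subseteq> V"
    and L_ne: "L \<noteq> {}"
  shows "(\<Sum>i\<in>V - L. \<pi> i * dist_set d i L) \<ge> 1 / s^2 - diam_set d L / 2"
proof -
  define f where "f i = dist_set d i L" for i
  define D where "D = diam_set d L"
  have finL: "finite L" using finV L_sub finite_subset by blast
  have ex: "\<exists>l\<in>L. d i l = f i" for i
  proof -
    have "Min ((\<lambda>j. d i j) ` L) \<in> (\<lambda>j. d i j) ` L"
      using finL L_ne by (intro Min_in) auto
    then show ?thesis unfolding f_def dist_set_def by auto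
  qed
  have fle: "f i \<le> d i l" if "l \<in> L" for i l
    unfolding f_def dist_set_def using finL that by (intro Min_le) auto
  have Dge: "d a b \<le> D" if "a \<in> L" "b \<in> L" for a b
  proof -
    have "(\<lambda>(i,j). d i j) (a,b) \<le> Max ((\<lambda>(i,j). d i j) ` (L \<times> L))"
      using finL that by (intro Max_ge) auto
    then show ?thesis unfolding D_def diam_set_def by simp
  qed
  have f0: "f i = 0" if "i \<in> L" for i
  proof -
    have "f i \<le> 0" using fle[OF that, of i] refl that L_sub by auto
    moreover obtain l where "l \<in> L" "d i l = f i" using ex by blast
    ultimately show ?thesis using nonneg that L_sub by force
  qed
  have fnn: "f i \<ge> 0" if "i \<in> V" for i
    using ex[of i] nonneg that L_sub by force
  have s2: "s \<le> s^2" using s_ge by (simp add: power2_eq_square)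
  have key: "d i j \<le> s^2 * (f i + f j + D)" if ij: "i \<in> V" "j \<in> V" for i j
  proof -
    obtain li where li: "li \<in> L" "d i li = f i" using ex by blast
    obtain lj where lj: "lj \<in> L" "d j lj = f j" using ex by blast
    have liV: "li \<in> V" and ljV: "lj \<in> V" using li lj L_sub by auto
    have 1: "d i j \<le> s * (d i li + d li j)" using relaxed_tri ij liV by blast
    have 2: "d li j \<le> s * (d li lj + d lj j)" using relaxed_tri ij liV ljV by blast
    have 3: "d lj j = f j" using lj sym ljV ij by auto
    have "d li lj \<le> D" using Dge li lj by blast
    then have 4: "d li j \<le> s * (D + f j)" using 2 3 s_ge
      by (smt (verit, best) mult_left_mono)
    have "d i j \<le> s * f i + s * (s * (D + f j))"
      using 1 4 li s_ge by (smt (verit, best) distrib_left mult_left_mono)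
    also have "\<dots> \<le> s^2 * f i + s^2 * (D + f j)"
      using s2 fnn[OF ij(1)] by (simp add: mult_right_mono power2_eq_square)
    finally show ?thesis by (simp add: algebra_simps)
  qed
  have "2 \<le> (\<Sum>i\<in>V. \<Sum>j\<in>V. \<pi> i * \<pi> j * (s^2 * (f i + f j + D)))"
    unfolding avg[symmetric]
    using key pi_pos by (intro sum_mono mult_left_mono) (auto intro: less_imp_le)
  also have "\<dots> = s^2 * ((\<Sum>i\<in>V. \<Sum>j\<in>V. \<pi> i * \<pi> j * f i) + (\<Sum>i\<in>V. \<Sum>j\<in>V. \<pi> i * \<pi> j * f j) + D * (\<Sum>i\<in>V. \<Sum>j\<in>V. \<pi> i * \<pi> j))"
    by (simp add: sum_distrib_left sum.distrib algebra_simps)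
  also have "(\<Sum>i\<in>V. \<Sum>j\<in>V. \<pi> i * \<pi> j * f i) = (\<Sum>i\<in>V. \<pi> i * f i)"
  proof -
    have "(\<Sum>i\<in>V. \<Sum>j\<in>V. \<pi> i * \<pi> j * f i) = (\<Sum>i\<in>V. \<pi> i * f i * (\<Sum>j\<in>V. \<pi> j))"
      by (simp add: sum_distrib_left algebra_simps)
    then show ?thesis using pi_sum by simp
  qed
  also have "(\<Sum>i\<in>V. \<Sum>j\<in>V. \<pi> i * \<pi> j * f j) = (\<Sum>i\<in>V. \<pi> i * f i)"
  proof -
    have "(\<Sum>i\<in>V. \<Sum>j\<in>V. \<pi> i * \<pi> j * f j) = (\<Sum>i\<in>V. \<pi> i * (\<Sum>j\<in>V. \<pi> j * f j))"
      by (simp add: sum_distrib_left algebra_simps)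
    also have "\<dots> = (\<Sum>j\<in>V. \<pi> j * f j)" using pi_sum by (simp add: sum_distrib_right[symmetric])
    finally show ?thesis .
  qed
  also have "(\<Sum>i\<in>V. \<Sum>j\<in>V. \<pi> i * \<pi> j) = 1"
    using pi_sum by (simp add: sum_distrib_left[symmetric] sum_distrib_right[symmetric])
  also have "s^2 * ((\<Sum>i\<in>V. \<pi> i * f i) + (\<Sum>i\<in>V. \<pi> i * f i) + D * 1) = s^2 * (2 * (\<Sum>i\<in>V. \<pi> i * f i) + D)" by simp
  finally have A: "2 \<le> s^2 * (2 * (\<Sum>i\<in>V. \<pi> i * f i) + D)" .
  have B: "(\<Sum>i\<in>V. \<pi> i * f i) = (\<Sum>i\<in>V - L. \<pi> i * f i)"
    using finV L_sub f0 by (intro sum.mono_neutral_right) auto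
  have sp: "s^2 > 0" using s_ge by simp
  from A have "1 / s^2 \<le> (\<Sum>i\<in>V. \<pi> i * f i) + D / 2" using sp
    by (simp add: field_simps)
  then show ?thesis using B unfolding f_def D_def by simp
qed

end
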